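(* Let $\Gamma(X,Y,E')$ be a connected bipartite graph with $m=|X|$, $n=|Y|$, and let $W=R_1R_0$ be the (extended) Szegedy walk operator on $\mathcal{H}^{m}\otimes\mathcal{H}^{n}$ defined from right-stochastic matrices $P=(p_{xy})$, $Q=(q_{yx})$ and real phases $\theta_{xy},\theta'_{xy}$ as described in the context. Let $\mathcal{H}_E\subset \mathcal{H}^{m}\otimes\mathcal{H}^{n}$ be the subspace spanned by $\{\ket{x}\otimes\ket{y}: \{x,y\}\in E'\}$. Then $W(\mathcal{H}_E)=\mathcal{H}_E$ and $W$ acts as the identity on $\mathcal{H}_E^{\perp}$; i.e., in a basis adapted to $\mathcal{H}_E\oplus\mathcal{H}_E^\perp$, $W=W|_{\mathcal{H}_E}\oplus I$.
   Context: Szegedy's QW: Let $\Gamma(X,Y,E')$ be a connected bipartite graph with biadjacency matrix $M$ ($M_{x,y}=1$ if $\{x,y\}\in E'$, else $0$). Let $P$ be an $m\times n$ right-stochastic matrix with entries $p_{xy}\ge 0$ such that $M_{x,y}=0\Rightarrow p_{xy}=0$, and $Q$ an $n\times m$ right-stochastic matrix with entries $q_{yx}\ge0$ such that $M_{x,y}=0\Rightarrow q_{yx}=0$. On $\mathcal{H}^{m}\otimes\mathcal{H}^{n}$ with computational basis $\{\ket{x,y}=\ket{x}\otimes\ket{y}: x\in X,y\in Y\}$ define, for real $\theta_{xy},\theta'_{xy}$, $\ket{\phi_x}=\sum_{y\in Y}\sqrt{p_{xy}}e^{i\theta_{xy}}\ket{x,y}$ and $\ket{\psi_y}=\sum_{x\in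 X}\sqrt{q_{yx}}e^{i\theta'_{xy}}\ket{x,y}$, and $R_0=2\sum_{x\in X}\ket{\phi_x}\bra{\phi_x}-I$, $R_1=2\sum_{y\in Y}\ket{\psi_y}\bra{\psi_y}-I$, $W=R_1R_0$. (Szegedy's original model has all phases zero; allowing nonzero phases gives the extended Szegedy QW.) *)

theory Defs
  imports Complex_Main
begin

text \<open>Vectors of H^m (x) H^n are functions on X \<times> Y (coefficients in the
computational basis |x,y>).  X and Y are finite types; the bipartite graph is
given by its biadjacency relation M.\<close>

type_synonym ('x,'y) qvec = "'x \<times> 'y \<Rightarrow> complex"

definition cinner :: "('x::finite,'y::finite) qvec \<Rightarrow> ('x,'y) qvec \<Rightarrow> complex" where
  "cinner u v = (\<Sum>k\<in>UNIV. cnj (u k) * v k)"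

definition ket :: "'x \<Rightarrow> 'y \<Rightarrow> ('x,'y) qvec" where
  "ket x y = (\<lambda>k. if k = (x,y) then 1 else 0)"

definition phi :: "('x \<Rightarrow> 'y \<Rightarrow> real) \<Rightarrow> ('x \<Rightarrow> 'y \<Rightarrow> real) \<Rightarrow> 'x \<Rightarrow> ('x,'y) qvec" where
  "phi p \<theta> x = (\<lambda>(x',y). if x' = x then complex_of_real (sqrt (p x y)) * exp (\<i> * complex_of_real (\<theta> x y)) else 0)"

definition psi :: "('y \<Rightarrow> 'x \<Rightarrow> real) \<Rightarrow> ('x \<Rightarrow> 'y \<Rightarrow> real) \<Rightarrow> 'y \<Rightarrow> ('x,'y) qvec" where
  "psi q \<theta>' y = (\<lambda>(x,y'). if y' = y then complex_of_real (sqrt (q y x)) * exp (\<i> * complex_of_real (\<theta>' x y)) else 0)"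

definition R0 :: "('x::finite \<Rightarrow> 'y::finite \<Rightarrow> real) \<Rightarrow> ('x \<Rightarrow> 'y \<Rightarrow> real) \<Rightarrow> ('x,'y) qvec \<Rightarrow> ('x,'y) qvec" where
  "R0 p \<theta> v = (\<lambda>k. 2 * (\<Sum>x\<in>UNIV. cinner (phi p \<theta> x) v * phi p \<theta> x k) - v k)"

definition R1 :: "('y::finite \<Rightarrow> 'x::finite \<Rightarrow> real) \<Rightarrow> ('x \<Rightarrow> 'y \<Rightarrow> real) \<Rightarrow> ('x,'y) qvec \<Rightarrow> ('x,'y) qvec" where
  "R1 q \<theta>' v = (\<lambda>k. 2 * (\<Sum>y\<in>UNIV. cinner (psi q \<theta>' y) v * psi q \<theta>' y k) - v k)"

definition Wop :: "('x::finite \<Rightarrow> 'y::finite \<Rightarrow> real) \<Rightarrow> ('y \<Rightarrow> 'x \<Rightarrow> real) \<Rightarrow> ('x \<Rightarrow> 'y \<Rightarrow> real) \<Rightarrow> ('x \<Rightarrow> 'y \<Rightarrow> real) \<Rightarrow> ('x,'y) qvec \<Rightarrow> ('x,'y) qvec" where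
  "Wop p q \<theta> \<theta>' v = R1 q \<theta>' (R0 p \<theta> v)"

definition HE :: "('x::finite \<Rightarrow> 'y::finite \<Rightarrow> bool) \<Rightarrow> ('x,'y) qvec set" where
  "HE M = {v. \<exists>c. v = (\<lambda>k. \<Sum>(x,y)\<in>{(x,y). M x y}. c x y * ket x y k)}"

definition HE_perp :: "('x::finite \<Rightarrow> 'y::finite \<Rightarrow> bool) \<Rightarrow> ('x,'y) qvec set" where
  "HE_perp M = {v. \<forall>u\<in>HE M. cinner u v = 0}"

definition bip_adj :: "('x \<Rightarrow> 'y \<Rightarrow> bool) \<Rightarrow> (('x + 'y) \<times> ('x + 'y)) set" where
  "bip_adj M = {(Inl x, Inr y) | x y. M x y} \<union> {(Inr y, Inl x) | x y. M x y}"

definition bip_connected :: "('x \<Rightarrow> 'y \<Rightarrow> bool) \<Rightarrow> bool" where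
  "bip_connected M \<longleftrightarrow> (\<forall>u v. (u, v) \<in> (bip_adj M)\<^sup>*)"

end

theory Submission
  imports Defs
begin

definition genR :: "('i::finite \<Rightarrow> ('x::finite,'y::finite) qvec) \<Rightarrow> ('x,'y) qvec \<Rightarrow> ('x,'y) qvec" where
  "genR f v = (\<lambda>k. 2 * (\<Sum>i\<in>UNIV. cinner (f i) v * f i k) - v k)"

lemma R0_genR: "R0 p \<theta> = genR (phi p \<theta>)"
  by (rule ext) (simp add: R0_def genR_def)

lemma R1_genR: "R1 q \<theta>' = genR (psi q \<theta>')"
  by (rule ext) (simp add: R1_def genR_def)

lemma cinner_lin:
  fixes u :: "('x::finite,'y::finite) qvec" and f :: "'i::finite \<Rightarrow> ('x,'y) qvec"
  shows "cinner u (\<lambda>k. 2 * (\<Sum>j\<in>UNIV. a j * f j k) - v k)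
       = 2 * (\<Sum>j\<in>UNIV. a j * cinner u (f j)) - cinner u v"
proof -
  have pt: "cnj (u k) * (2 * (\<Sum>j\<in>UNIV. a j * f j k) - v k)
      = 2 * (\<Sum>j\<in>UNIV. a j * (cnj (u k) * f j k)) - cnj (u k) * v k" for k
  proof -
    have "cnj (u k) * (\<Sum>j\<in>UNIV. a j * f j k) = (\<Sum>j\<in>UNIV. a j * (cnj (u k) * f j k))"
      by (simp add: sum_distrib_left mult.left_commute)
    then show ?thesis by (simp add: right_diff_distrib mult.left_commute)
  qed
  have "cinner u (\<lambda>k. 2 * (\<Sum>j\<in>UNIV. a j * f j k) - v k)
     = (\<Sum>k\<in>UNIV. 2 * (\<Sum>j\<in>UNIV. a j * (cnj (u k) * f j k)) - cnj (u k) * v k)"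
    unfolding cinner_def using pt by simp
  also have "\<dots> = 2 * (\<Sum>k\<in>UNIV. \<Sum>j\<in>UNIV. a j * (cnj (u k) * f j k)) - cinner u v"
    unfolding cinner_def by (simp add: sum_subtractf sum_distrib_left)
  also have "(\<Sum>k\<in>UNIV. \<Sum>j\<in>UNIV. a j * (cnj (u k) * f j k)) = (\<Sum>j\<in>UNIV. a j * cinner u (f j))"
    unfolding cinner_def by (subst sum.swap) (simp add: sum_distrib_left)
  finally show ?thesis .
qed

lemma genR_invol:
  fixes f :: "'i::finite \<Rightarrow> ('x::finite,'y::finite) qvec"
  assumes on: "\<And>i j. cinner (f i) (f j) = (if i = j then 1 else 0)"
  shows "genR f (genR f v) = v"
proof -
  have c: "cinner (f i) (genR f v) = cinner (f i) v" for i
  proof -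
    have "cinner (f i) (genR f v) = 2 * (\<Sum>j\<in>UNIV. cinner (f j) v * cinner (f i) (f j)) - cinner (f i) v"
      unfolding genR_def by (rule cinner_lin)
    also have "(\<Sum>j\<in>UNIV. cinner (f j) v * cinner (f i) (f j)) = cinner (f i) v"
      by (simp add: on if_distrib cong: if_cong)
    finally show ?thesis by simp
  qed
  show ?thesis
    by (rule ext) (simp add: c genR_def[of f "genR f v"], simp add: genR_def)
qed

lemma sum_pairs:
  fixes g :: "'x::finite \<times> 'y::finite \<Rightarrow> complex"
  shows "(\<Sum>k\<in>UNIV. g k) = (\<Sum>a\<in>UNIV. \<Sum>b\<in>UNIV. g (a,b))"
  by (simp add: UNIV_Times_UNIV[symmetric] sum.cartesian_product del: UNIV_Times_UNIV)

lemma cnj_mult_self: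
  assumes "r \<ge> 0"
  shows "complex_of_real (sqrt r) * cnj (exp (\<i> * complex_of_real t)) *
         (complex_of_real (sqrt r) * exp (\<i> * complex_of_real t)) = complex_of_real r"
proof -
  have n: "cmod (exp (\<i> * complex_of_real t)) = 1" by simp
  have e: "cnj (exp (\<i> * complex_of_real t)) * exp (\<i> * complex_of_real t) = 1"
    using complex_norm_square[of "exp (\<i> * complex_of_real t)"] n
    by (simp only: mult.commute power_one of_real_1)
  have s: "complex_of_real (sqrt r) * complex_of_real (sqrt r) = complex_of_real r"
    using assms by (simp only: of_real_mult[symmetric] real_sqrt_mult_self abs_of_nonneg)
  have "complex_of_real (sqrt r) * cnj (exp (\<i> * complex_of_real t)) *
         (complex_of_real (sqrt r) * exp (\<i> * complex_of_real t))
      = (complex_of_real (sqrt r) * complex_of_real (sqrt r)) *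
        (cnj (exp (\<i> * complex_of_real t)) * exp (\<i> * complex_of_real t))"
    by (simp only: ac_simps)
  then show ?thesis using e s by simp
qed

lemma sum_if_outer:
  fixes g :: "'b::finite \<Rightarrow> complex"
  shows "(\<Sum>a\<in>(UNIV::'a::finite set). \<Sum>b\<in>UNIV. if a = c then g b else 0) = (\<Sum>b\<in>UNIV. g b)"
proof -
  have "(\<Sum>a\<in>(UNIV::'a set). \<Sum>b\<in>UNIV. if a = c then g b else 0)
      = (\<Sum>a\<in>(UNIV::'a set). if a = c then (\<Sum>b\<in>UNIV. g b) else 0)"
    by (rule sum.cong) auto
  then show ?thesis by simp
qed

lemma phi_on:
  fixes p :: "'x::finite \<Rightarrow> 'y::finite \<Rightarrow> real"
  assumes nn: "\<And>x y. p x y \<ge> 0" and st: "\<And>x. (\<Sum>y\<in>UNIV. p x y) = 1"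
  shows "cinner (phi p \<theta> x) (phi p \<theta> x') = (if x = x' then 1 else 0)"
proof (cases "x = x'")
  case True
  have "cinner (phi p \<theta> x) (phi p \<theta> x') = (\<Sum>b\<in>UNIV. complex_of_real (p x b))"
    unfolding cinner_def sum_pairs using True
    by (simp add: phi_def cnj_mult_self nn if_distrib sum_if_outer cong: if_cong)
  also have "\<dots> = 1" using st[of x] by (metis of_real_1 of_real_sum)
  finally show ?thesis using True by simp
next
  case False
  then show ?thesis unfolding cinner_def sum_pairs by (auto simp: phi_def intro!: sum.neutral)
qed

lemma psi_on:
  fixes q :: "'y::finite \<Rightarrow> 'x::finite \<Rightarrow> real"
  assumes nn: "\<And>x y. q y x \<ge> 0" and st: "\<And>y. (\<Sum>x\<in>UNIV. q y x) = 1"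
  shows "cinner (psi q \<theta>' y) (psi q \<theta>' y') = (if y = y' then 1 else 0)"
proof (cases "y = y'")
  case True
  have "cinner (psi q \<theta>' y) (psi q \<theta>' y') = (\<Sum>a\<in>UNIV. complex_of_real (q y a))"
    unfolding cinner_def sum_pairs using True
    by (simp add: psi_def cnj_mult_self nn if_distrib cong: if_cong)
  also have "\<dots> = 1" using st[of y] by (metis of_real_1 of_real_sum)
  finally show ?thesis using True by simp
next
  case False
  then show ?thesis unfolding cinner_def sum_pairs by (auto simp: psi_def intro!: sum.neutral)
qed

lemma HE_iff: "v \<in> HE M \<longleftrightarrow> (\<forall>x y. \<not> M x y \<longrightarrow> v (x,y) = 0)"
proof
  assume "v \<in> HE M"
  then obtain c where v: "v = (\<lambda>k. \<Sum>(x,y)\<in>{(x,y). M x y}. c x y * ket x y k)"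
    unfolding HE_def by blast
  show "\<forall>x y. \<not> M x y \<longrightarrow> v (x,y) = 0"
  proof (intro allI impI)
    fix x y assume "\<not> M x y"
    have "\<forall>k\<in>{(x,y). M x y}. (case k of (a,b) \<Rightarrow> c a b * ket a b (x,y)) = 0"
      using \<open>\<not> M x y\<close> by (auto simp: ket_def)
    then show "v (x,y) = 0" unfolding v by (simp add: sum.neutral)
  qed
next
  assume h: "\<forall>x y. \<not> M x y \<longrightarrow> v (x,y) = 0"
  have "v = (\<lambda>k. \<Sum>(x,y)\<in>{(x,y). M x y}. v (x,y) * ket x y k)"
  proof
    fix k :: "'a \<times> 'b"
    obtain a b where k: "k = (a,b)" by fastforce
    have "(\<Sum>(x,y)\<in>{(x,y). M x y}. v (x,y) * ket x y k)
        = (\<Sum>z\<in>{(x,y). M x y}. if z = k then v k else 0)"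
      by (rule sum.cong) (auto simp: ket_def)
    also have "\<dots> = v k"
      using h k by (auto simp: sum.delta)
    finally show "v k = (\<Sum>(x,y)\<in>{(x,y). M x y}. v (x,y) * ket x y k)" by simp
  qed
  then show "v \<in> HE M" unfolding HE_def by (intro CollectI exI[of _ "\<lambda>x y. v (x,y)"])
qed

lemma ket_HE: "M x y \<Longrightarrow> ket x y \<in> HE M"
  unfolding HE_iff ket_def by auto

lemma cinner_ket: "cinner (ket x y) v = v (x,y)"
proof -
  have "cinner (ket x y) v = (\<Sum>k\<in>UNIV. if k = (x,y) then v k else 0)"
    unfolding cinner_def ket_def by (intro sum.cong refl) simp
  then show ?thesis by simp
qed

lemma HE_perp_iff: "v \<in> HE_perp M \<longleftrightarrow> (\<forall>x y. M x y \<longrightarrow> v (x,y) = 0)"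
proof
  assume "v \<in> HE_perp M"
  then show "\<forall>x y. M x y \<longrightarrow> v (x,y) = 0"
  proof (intro allI impI)
    fix x y assume "M x y"
    then have "cinner (ket x y) v = 0"
      using \<open>v \<in> HE_perp M\<close> ket_HE unfolding HE_perp_def by blast
    then show "v (x,y) = 0" by (simp add: cinner_ket)
  qed
next
  assume h: "\<forall>x y. M x y \<longrightarrow> v (x,y) = 0"
  show "v \<in> HE_perp M"
    unfolding HE_perp_def
  proof (intro CollectI ballI)
    fix u assume "u \<in> HE M"
    then have hu: "\<forall>x y. \<not> M x y \<longrightarrow> u (x,y) = 0" by (simp add: HE_iff)
    show "cinner u v = 0" unfolding cinner_def
    proof (rule sum.neutral, intro ballI)
      fix k :: "'a \<times> 'b"
      obtain a b where k: "k = (a,b)" by fastforce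
      show "cnj (u k) * v k = 0"
      proof (cases "M a b")
        case True
        then have "v (a,b) = 0" using h by blast
        then show ?thesis using k by simp
      next
        case False
        then have "u (a,b) = 0" using hu by blast
        then show ?thesis using k by simp
      qed
    qed
  qed
qed

lemma genR_HE:
  assumes f: "\<And>i. f i \<in> HE M" and v: "v \<in> HE M"
  shows "genR f v \<in> HE M"
  using f v unfolding HE_iff genR_def by simp

lemma genR_perp:
  assumes f: "\<And>i. f i \<in> HE M" and v: "v \<in> HE_perp M"
  shows "genR f v = (\<lambda>k. - v k)"
proof -
  have "cinner (f i) v = 0" for i using f v unfolding HE_perp_def by blast
  then show ?thesis unfolding genR_def by simp
qed

lemma phi_HE:
  assumes "\<And>x y. \<not> M x y \<Longrightarrow> p x y = 0"
  shows "phi p \<theta> x \<in> HE M"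
  using assms unfolding HE_iff phi_def by auto

lemma psi_HE:
  assumes "\<And>x y. \<not> M x y \<Longrightarrow> q y x = 0"
  shows "psi q \<theta>' y \<in> HE M"
  using assms unfolding HE_iff psi_def by auto

theorem lemma1:
  fixes M :: "'x::finite \<Rightarrow> 'y::finite \<Rightarrow> bool"
    and p :: "'x \<Rightarrow> 'y \<Rightarrow> real" and q :: "'y \<Rightarrow> 'x \<Rightarrow> real"
    and \<theta> \<theta>' :: "'x \<Rightarrow> 'y \<Rightarrow> real"
  assumes conn: "bip_connected M"
    and p_nonneg: "\<And>x y. p x y \<ge> 0"
    and p_stoch: "\<And>x. (\<Sum>y\<in>UNIV. p x y) = 1"
    and p_supp: "\<And>x y. \<not> M x y \<Longrightarrow> p x y = 0"
    and q_nonneg: "\<And>x y. q y x \<ge> 0"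
    and q_stoch: "\<And>y. (\<Sum>x\<in>UNIV. q y x) = 1"
    and q_supp: "\<And>x y. \<not> M x y \<Longrightarrow> q y x = 0"
  shows "Wop p q \<theta> \<theta>' ` HE M = HE M \<and> (\<forall>v\<in>HE_perp M. Wop p q \<theta> \<theta>' v = v)"
proof -
  have fp: "\<And>x. phi p \<theta> x \<in> HE M" using phi_HE p_supp by blast
  have fq: "\<And>y. psi q \<theta>' y \<in> HE M" using psi_HE q_supp by blast
  have W: "Wop p q \<theta> \<theta>' = (\<lambda>v. genR (psi q \<theta>') (genR (phi p \<theta>) v))"
    by (rule ext) (simp add: Wop_def R0_genR R1_genR)
  have i0: "genR (phi p \<theta>) (genR (phi p \<theta>) v) = v" for v
    by (rule genR_invol) (rule phi_on[OF p_nonneg p_stoch])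
  have i1: "genR (psi q \<theta>') (genR (psi q \<theta>') v) = v" for v
    by (rule genR_invol) (rule psi_on[OF q_nonneg q_stoch])
  have sub: "Wop p q \<theta> \<theta>' ` HE M \<subseteq> HE M"
  proof
    fix w assume "w \<in> Wop p q \<theta> \<theta>' ` HE M"
    then obtain v where v: "v \<in> HE M" and w: "w = Wop p q \<theta> \<theta>' v" by blast
    have "genR (phi p \<theta>) v \<in> HE M" by (rule genR_HE[where f="phi p \<theta>", OF fp v])
    then have "genR (psi q \<theta>') (genR (phi p \<theta>) v) \<in> HE M" by (rule genR_HE[where f="psi q \<theta>'", OF fq])
    then show "w \<in> HE M" using w W by simp
  qed
  have sup: "HE M \<subseteq> Wop p q \<theta> \<theta>' ` HE M"
  proof
    fix v assume v: "v \<in> HE M"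
    let ?u = "genR (phi p \<theta>) (genR (psi q \<theta>') v)"
    have "genR (psi q \<theta>') v \<in> HE M" by (rule genR_HE[where f="psi q \<theta>'", OF fq v])
    then have "?u \<in> HE M" by (rule genR_HE[where f="phi p \<theta>", OF fp])
    moreover have "Wop p q \<theta> \<theta>' ?u = v" unfolding W by (simp add: i0 i1)
    ultimately show "v \<in> Wop p q \<theta> \<theta>' ` HE M" by (metis rev_image_eqI)
  qed
  have perp: "Wop p q \<theta> \<theta>' v = v" if v: "v \<in> HE_perp M" for v
  proof -
    have nv: "(\<lambda>k. - v k) \<in> HE_perp M" using v unfolding HE_perp_iff by simp
    show ?thesis unfolding W
      using genR_perp[where f="phi p \<theta>", OF fp v] genR_perp[where f="psi q \<theta>'", OF fq nv] by simp
  qed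
  show ?thesis using subset_antisym[OF sub sup] perp by (intro conjI) simp_all
qed

end
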